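(* Let $(X,\pi)$ be a finite symmetric two-player game with relative payoff game $(X,\Delta)$. If $(X,\Delta)$ is an exact potential game, then imitation is essentially unbeatable.
   Context: $\pi(x,y)$ is the payoff of the player choosing $x$ against $y$; $\Delta(x,y)=\pi(x,y)-\pi(y,x)$. The symmetric game $(X,\Delta)$ is an exact potential game if there is $P:X\times X\to\mathbb{R}$ such that for all $y,x,x'\in X$: $\Delta(x,y)-\Delta(x',y)=P(x,y)-P(x',y)$ and $\Delta(x,y)-\Delta(x',y)=P(y,x)-P(y,x')$. Let $\hat\Delta:=\max_{x,y\in X}\Delta(x,y)$. Imitate-the-best: given initial $y_0\in X$ and any opponent sequence $(x_t)_{t\ge0}$, $y_t=x_{t-1}$ if $\Delta(x_{t-1},y_{t-1})>0$ and $y_t=y_{t-1}$ otherwise. Imitation is essentially unbeatable if for every $y_0\in X$ and every sequence $(x_t)$, $\limsup_{T\to\infty}\sum_{t=0}^T\Delta(x_t,y_t)\le\hat\Delta$. *)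

theory Defs
  imports Complex_Main "HOL-Library.Liminf_Limsup" "HOL-Library.Extended_Real"
begin

definition rel_payoff :: "('a \<Rightarrow> 'a \<Rightarrow> real) \<Rightarrow> 'a \<Rightarrow> 'a \<Rightarrow> real" where
  "rel_payoff payoff x y = payoff x y - payoff y x"

definition exact_potential_game :: "'a set \<Rightarrow> ('a \<Rightarrow> 'a \<Rightarrow> real) \<Rightarrow> bool" where
  "exact_potential_game X D \<longleftrightarrow>
     (\<exists>P :: 'a \<Rightarrow> 'a \<Rightarrow> real. \<forall>y\<in>X. \<forall>x\<in>X. \<forall>x'\<in>X.
        D x y - D x' y = P x y - P x' y \<and> D x y - D x' y = P y x - P y x')"

definition max_rel :: "'a set \<Rightarrow> ('a \<Rightarrow> 'a \<Rightarrow> real) \<Rightarrow> real" where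
  "max_rel X D = Max ((\<lambda>(x, y). D x y) ` (X \<times> X))"

primrec imitate :: "('a \<Rightarrow> 'a \<Rightarrow> real) \<Rightarrow> 'a \<Rightarrow> (nat \<Rightarrow> 'a) \<Rightarrow> nat \<Rightarrow> 'a" where
  "imitate D y0 xs 0 = y0"
| "imitate D y0 xs (Suc t) =
     (if D (xs t) (imitate D y0 xs t) > 0 then xs t else imitate D y0 xs t)"

definition essentially_unbeatable :: "'a set \<Rightarrow> ('a \<Rightarrow> 'a \<Rightarrow> real) \<Rightarrow> bool" where
  "essentially_unbeatable X D \<longleftrightarrow>
     (\<forall>y0\<in>X. \<forall>xs :: nat \<Rightarrow> 'a. (\<forall>t. xs t \<in> X) \<longrightarrow>
        limsup (\<lambda>T. ereal (\<Sum>t\<le>T. D (xs t) (imitate D y0 xs t))) \<le> ereal (max_rel X D))"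

end

theory Submission
  imports Defs
begin

theorem corollary5:
  fixes X :: "'a set" and payoff :: "'a \<Rightarrow> 'a \<Rightarrow> real"
  assumes "finite X"
    and "exact_potential_game X (rel_payoff payoff)"
  shows "essentially_unbeatable X (rel_payoff payoff)"
proof -
  define D where "D = rel_payoff payoff"
  have anti: "D x y = - D y x" for x y unfolding D_def rel_payoff_def by simp
  obtain P where P: "\<forall>y\<in>X. \<forall>x\<in>X. \<forall>x'\<in>X.
        D x y - D x' y = P x y - P x' y \<and> D x y - D x' y = P y x - P y x'"
    using assms(2) unfolding exact_potential_game_def D_def by blast
  define f where "f x = P x x / 2" for x
  have Df: "D x y = f x - f y" if "x \<in> X" "y \<in> X" for x y
  proof -
    have d0: "D z z = 0" for z using anti[of z z] by simp
    have "D x y - D y y = P y x - P y y" using P that by blast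
    moreover have "D y x - D x x = P y x - P x x" using P that by blast
    ultimately show ?thesis using anti[of x y] d0 unfolding f_def by (simp add: field_simps)
  qed
  show ?thesis unfolding essentially_unbeatable_def D_def[symmetric]
  proof (intro ballI allI impI)
    fix y0 :: 'a and xs :: "nat \<Rightarrow> 'a" assume y0: "y0 \<in> X" and xs: "\<forall>t. xs t \<in> X"
    let ?y = "imitate D y0 xs"
    have yX: "?y t \<in> X" for t by (induction t) (use y0 xs in auto)
    have step: "D (xs t) (?y t) \<le> f (?y (Suc t)) - f (?y t)" for t
      using Df[OF _ yX, of "xs t" t] xs by auto
    have sum: "(\<Sum>t\<le>T. D (xs t) (?y t)) \<le> f (?y (Suc T)) - f y0" for T
    proof (induction T)
      case 0 then show ?case using step[of 0] by simp
    next
      case (Suc T) then show ?case using step[of "Suc T"] by simp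
    qed
    have mx: "D a b \<le> max_rel X D" if "a \<in> X" "b \<in> X" for a b
      unfolding max_rel_def
      by (rule Max_ge) (use assms(1) that in force)+
    have "(\<Sum>t\<le>T. D (xs t) (?y t)) \<le> max_rel X D" for T
      using sum[of T] mx[OF yX[of "Suc T"] y0] Df[OF yX[of "Suc T"] y0] by simp
    then show "limsup (\<lambda>T. ereal (\<Sum>t\<le>T. D (xs t) (?y t))) \<le> ereal (max_rel X D)"
      by (intro Limsup_bounded) auto
  qed
qed

end
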